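(* Let $R$ be a finite set of attributes. Consider formal expressions (dependencies) of the form $X \rightarrow Y$ with $X, Y \subseteq R$, where juxtaposition of attribute sets denotes union (e.g. $XZ = X \cup Z$). Consider the following two systems of inference rules on such expressions. System O: (O1) Identity: for all $X \subseteq R$, infer $X \rightarrow X$. (O2) Decomposition: from $X \rightarrow Y$ and $Z \subseteq Y$, infer $X \rightarrow Z$. (O3) Composition: from $X \rightarrow Y$ and $Z \rightarrow W$, infer $XZ \rightarrow YW$. System N: (N1) Reflexivity: for all $Y \subseteq X \subseteq R$, infer $X \rightarrow Y$. (N2) Append: from $X \rightarrow Y$ and $Z \subseteq W$, infer $XW \rightarrow YZ$. (N3) Union: from $X \rightarrow Y$ and $X \rightarrow Z$, infer $X \rightarrow YZ$. (N4) Simplification: from $X \rightarrow YZ$, infer $X \rightarrow Y$ and $X \rightarrow Z$. Then the two systems are equivalent: every rule of System O is derivable using the rules of System N, and every rule of System N is derivable using the rules of System O. Consequently, for every set $\Sigma$ of such expressions and every expression $X \rightarrow Y$, $X \rightarrow Y$ is derivable from $\Sigma$ using System O if and only if it is derivable from $\Sigma$ using System N.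
   Context: System O is the axiom system the paper gives for Ontology Functional Dependencies (OFDs); System N is the axiom system for Null Functional Dependencies (NFDs), i.e. functional dependencies over relations with nulls. The statement concerns only syntactic derivability with these rules; $X, Y, Z, W$ range over subsets of $R$. *)

theory Defs
  imports Main
begin

text \<open>A dependency X -> Y over attribute set R is represented by the pair (X, Y).
  Juxtaposition XZ is union.\<close>

type_synonym 'a dep = "'a set \<times> 'a set"

inductive derivO :: "'a set \<Rightarrow> 'a dep set \<Rightarrow> 'a dep \<Rightarrow> bool"
  for R :: "'a set" and \<Sigma> :: "'a dep set" where
  O_hyp: "d \<in> \<Sigma> \<Longrightarrow> derivO R \<Sigma> d"
| O1_identity: "X \<subseteq> R \<Longrightarrow> derivO R \<Sigma> (X, X)"
| O2_decomposition: "derivO R \<Sigma> (X, Y) \<Longrightarrow> Z \<subseteq> Y \<Longrightarrow> derivO R \<Sigma> (X, Z)"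
| O3_composition: "derivO R \<Sigma> (X, Y) \<Longrightarrow> derivO R \<Sigma> (Z, W) \<Longrightarrow> derivO R \<Sigma> (X \<union> Z, Y \<union> W)"

inductive derivN :: "'a set \<Rightarrow> 'a dep set \<Rightarrow> 'a dep \<Rightarrow> bool"
  for R :: "'a set" and \<Sigma> :: "'a dep set" where
  N_hyp: "d \<in> \<Sigma> \<Longrightarrow> derivN R \<Sigma> d"
| N1_reflexivity: "Y \<subseteq> X \<Longrightarrow> X \<subseteq> R \<Longrightarrow> derivN R \<Sigma> (X, Y)"
| N2_append: "derivN R \<Sigma> (X, Y) \<Longrightarrow> Z \<subseteq> W \<Longrightarrow> W \<subseteq> R \<Longrightarrow> derivN R \<Sigma> (X \<union> W, Y \<union> Z)"
| N3_union: "derivN R \<Sigma> (X, Y) \<Longrightarrow> derivN R \<Sigma> (X, Z) \<Longrightarrow> derivN R \<Sigma> (X, Y \<union> Z)"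
| N4_simplification1: "derivN R \<Sigma> (X, Y \<union> Z) \<Longrightarrow> derivN R \<Sigma> (X, Y)"
| N4_simplification2: "derivN R \<Sigma> (X, Y \<union> Z) \<Longrightarrow> derivN R \<Sigma> (X, Z)"

definition deps_over :: "'a set \<Rightarrow> 'a dep set \<Rightarrow> bool" where
  "deps_over R \<Sigma> \<longleftrightarrow> (\<forall>(X, Y) \<in> \<Sigma>. X \<subseteq> R \<and> Y \<subseteq> R)"

end

theory Submission
  imports Defs
begin

lemma N_sub:
  assumes "derivN R S d" "deps_over R S"
  shows "fst d \<subseteq> R \<and> snd d \<subseteq> R"
  using assms(1)
proof induction
  case (N_hyp d)
  obtain a b where ab: "d = (a, b)" by (cases d)
  have "(a, b) \<in> S" using N_hyp ab by simp
  then have "a \<subseteq> R \<and> b \<subseteq> R" using assms(2) unfolding deps_over_def by blast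
  then show ?case using ab by simp
next
  case (N1_reflexivity Y X) then show ?case by simp
next
  case (N2_append X Y Z W) then show ?case by simp
next
  case (N3_union X Y Z) then show ?case by simp
next
  case (N4_simplification1 X Y Z) then show ?case by simp
next
  case (N4_simplification2 X Y Z) then show ?case by simp
qed

lemma N_O3: assumes "deps_over R S" "derivN R S (X, Y)" "derivN R S (Z, W)"
  shows "derivN R S (X \<union> Z, Y \<union> W)"
proof -
  have "X \<subseteq> R" "Z \<subseteq> R" using N_sub[OF assms(2,1)] N_sub[OF assms(3,1)] by auto
  have a: "derivN R S (X \<union> Z, Y \<union> {})" using N2_append[OF assms(2), of "{}" Z] \<open>Z \<subseteq> R\<close> by blast
  have b: "derivN R S (Z \<union> X, W \<union> {})" using N2_append[OF assms(3), of "{}" X] \<open>X \<subseteq> R\<close> by blast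
  have a': "derivN R S (X \<union> Z, Y)" using a by simp
  have b': "derivN R S (X \<union> Z, W)" using b by (simp add: Un_commute[of Z X])
  have "derivN R S (X \<union> Z, Y \<union> W)" by (rule N3_union[OF a' b'])
  thus ?thesis .
qed

lemma N_O2: "derivN R S (X, Y) \<Longrightarrow> Z \<subseteq> Y \<Longrightarrow> derivN R S (X, Z)"
  by (rule N4_simplification1[where Z=Y]) (simp add: Un_absorb1)

lemma O_N1: "Y \<subseteq> X \<Longrightarrow> X \<subseteq> R \<Longrightarrow> derivO R S (X, Y)"
  by (rule O2_decomposition[OF O1_identity])

lemma O_N2: "derivO R S (X, Y) \<Longrightarrow> Z \<subseteq> W \<Longrightarrow> W \<subseteq> R \<Longrightarrow> derivO R S (X \<union> W, Y \<union> Z)"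
  by (rule O3_composition) (auto intro: O_N1)

lemma O_N3: "derivO R S (X, Y) \<Longrightarrow> derivO R S (X, Z) \<Longrightarrow> derivO R S (X, Y \<union> Z)"
  using O3_composition[of R S X Y X Z] by simp

lemma O_to_N: "derivO R S d \<Longrightarrow> deps_over R S \<Longrightarrow> derivN R S d"
proof (induction rule: derivO.induct)
  case (O_hyp d) from O_hyp.hyps show ?case by (rule N_hyp)
next
  case (O1_identity X) from O1_identity.hyps show ?case by (rule N1_reflexivity[OF order_refl])
next
  case (O2_decomposition X Y Z) from O2_decomposition.IH[OF O2_decomposition.prems] O2_decomposition.hyps(2) show ?case by (rule N_O2)
next
  case (O3_composition X Y Z W) show ?case using O3_composition.IH O3_composition.prems by (intro N_O3) simp_all
qed

lemma N_to_O: "derivN R S d \<Longrightarrow> derivO R S d"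
proof (induction rule: derivN.induct)
  case (N4_simplification1 X Y Z) thus ?case by (meson O2_decomposition Un_upper1 Un_upper2)
next
  case (N4_simplification2 X Y Z) thus ?case by (meson O2_decomposition Un_upper1 Un_upper2)
next
  case (N_hyp d) from N_hyp.hyps show ?case by (rule O_hyp)
next
  case (N1_reflexivity Y X) from N1_reflexivity.hyps show ?case by (rule O_N1)
next
  case (N2_append X Y Z W) from N2_append.IH N2_append.hyps(2,3) show ?case by (rule O_N2)
next
  case (N3_union X Y Z) from N3_union.IH show ?case by (rule O_N3)
qed

lemma hA: "X \<subseteq> R \<Longrightarrow> derivN R S (X, X)" by (rule N1_reflexivity[OF order_refl])
lemma hB1: "derivO R S (X, Y \<union> Z) \<Longrightarrow> derivO R S (X, Y)"
  by (erule O2_decomposition) (rule Un_upper1)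
lemma hB2: "derivO R S (X, Y \<union> Z) \<Longrightarrow> derivO R S (X, Z)"
  by (erule O2_decomposition) (rule Un_upper2)
lemma hC: "deps_over R S \<Longrightarrow> derivO R S (X, Y) = derivN R S (X, Y)"
proof (rule iffI)
  assume d: "deps_over R S"
  show "derivO R S (X, Y) \<Longrightarrow> derivN R S (X, Y)" by (rule O_to_N[OF _ d])
  show "derivN R S (X, Y) \<Longrightarrow> derivO R S (X, Y)" by (rule N_to_O)
qed

theorem theorem3p6:
  fixes R :: "'a set"
  assumes "finite R"
  shows
    \<comment> \<open>every rule of System O is derivable using System N\<close>
    "(\<forall>\<Sigma>. deps_over R \<Sigma> \<longrightarrow>
        (\<forall>X. X \<subseteq> R \<longrightarrow> derivN R \<Sigma> (X, X))
      \<and> (\<forall>X Y Z. derivN R \<Sigma> (X, Y) \<longrightarrow> Z \<subseteq> Y \<longrightarrow> derivN R \<Sigma> (X, Z))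
      \<and> (\<forall>X Y Z W. derivN R \<Sigma> (X, Y) \<longrightarrow> derivN R \<Sigma> (Z, W) \<longrightarrow> derivN R \<Sigma> (X \<union> Z, Y \<union> W)))
   \<and> \<comment> \<open>every rule of System N is derivable using System O\<close>
     (\<forall>\<Sigma>. deps_over R \<Sigma> \<longrightarrow>
        (\<forall>X Y. Y \<subseteq> X \<longrightarrow> X \<subseteq> R \<longrightarrow> derivO R \<Sigma> (X, Y))
      \<and> (\<forall>X Y Z W. derivO R \<Sigma> (X, Y) \<longrightarrow> Z \<subseteq> W \<longrightarrow> W \<subseteq> R \<longrightarrow> derivO R \<Sigma> (X \<union> W, Y \<union> Z))
      \<and> (\<forall>X Y Z. derivO R \<Sigma> (X, Y) \<longrightarrow> derivO R \<Sigma> (X, Z) \<longrightarrow> derivO R \<Sigma> (X, Y \<union> Z))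
      \<and> (\<forall>X Y Z. derivO R \<Sigma> (X, Y \<union> Z) \<longrightarrow> derivO R \<Sigma> (X, Y) \<and> derivO R \<Sigma> (X, Z)))
   \<and> \<comment> \<open>consequently, the two derivability relations coincide\<close>
     (\<forall>\<Sigma> X Y. deps_over R \<Sigma> \<longrightarrow> X \<subseteq> R \<longrightarrow> Y \<subseteq> R \<longrightarrow>
        (derivO R \<Sigma> (X, Y) \<longleftrightarrow> derivN R \<Sigma> (X, Y)))"
  apply (intro conjI allI impI)
          apply (erule hA)
         apply (erule N_O2, assumption)
        apply (erule N_O3, assumption, assumption)
       apply (erule O_N1, assumption)
      apply (erule O_N2, assumption, assumption)
     apply (erule O_N3, assumption)
    apply (erule hB1)
   apply (erule hB2)
  apply (erule hC)
  done

end
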